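(* If $v,w\in\mathfrak{H}$ are words in $x,y$ that are cyclically equivalent (one is obtained from the other by a cyclic permutation of its letters), then $\rho_{1,t}^{(\hbar)}(v)=\rho_{1,t}^{(\hbar)}(w)$.
   Context: Let $\hbar,t$ be formal variables and $\mathfrak{H}=\mathbb{Q}[\hbar,t]\langle x,y\rangle$. Let $\gamma_\hbar^t$ be the algebra automorphism of $\mathfrak{H}$ with $\gamma_\hbar^t(x)=x$, $\gamma_\hbar^t(y)=tx+y+\hbar t$. Make $\mathfrak{H}\otimes\mathfrak{H}$ (over $\mathbb{Q}[\hbar,t]$) an $\mathfrak{H}$-bimodule by $a\diamond(w_1\otimes w_2)=w_1\otimes aw_2$ and $(w_1\otimes w_2)\diamond b=w_1b\otimes w_2$. Let $\mathcal C_{1,t}^{(\hbar)}:\mathfrak{H}\to\mathfrak{H}\otimes\mathfrak{H}$ be the $\mathbb{Q}[\hbar,t]$-linear map with $\mathcal C_{1,t}^{(\hbar)}(x)=-\mathcal C_{1,t}^{(\hbar)}(y)=x\otimes y$ and $\mathcal C_{1,t}^{(\hbar)}(vw)=\mathcal C_{1,t}^{(\hbar)}(v)\diamond(\gamma_\hbar^t)^{-1}(w)+(\gamma_\hbar^t)^{-1}(v)\diamond\mathcal C_{1,t}^{(\hbar)}(w)$. Let $\rho_{1,t}^{(\hbar)}=M_1\circ\mathcal C_{1,t}^{(\hbar)}$ where $M_1(w_1\otimes w_2)=w_1w_2$. *)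

theory Defs
  imports "HOL-Library.Poly_Mapping" "HOL-Computational_Algebra.Polynomial"
begin

text \<open>Coefficient ring Q[hbar,t], realised as (Q[hbar])[t].\<close>
type_synonym coef = "rat poly poly"

definition hbar :: coef where "hbar = [: [:0, 1:] :]"
definition tv :: coef where "tv = [:0, 1:]"

datatype letter = X | Y

text \<open>The free algebra H = Q[hbar,t]<x,y>: finitely supported functions from words to coefficients.\<close>
type_synonym H = "letter list \<Rightarrow>\<^sub>0 coef"
text \<open>The tensor product H (x) H over Q[hbar,t]: free module on pairs of words.\<close>
type_synonym HH = "(letter list \<times> letter list) \<Rightarrow>\<^sub>0 coef"

definition hmul :: "H \<Rightarrow> H \<Rightarrow> H" where
  "hmul p q = (\<Sum>u\<in>Poly_Mapping.keys p. \<Sum>v\<in>Poly_Mapping.keys q. Poly_Mapping.single (u @ v) (Poly_Mapping.lookup p u * Poly_Mapping.lookup q v))"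

definition hone :: H where "hone = Poly_Mapping.single [] 1"

definition word :: "letter list \<Rightarrow> H" where "word w = Poly_Mapping.single w 1"

definition lact :: "H \<Rightarrow> HH \<Rightarrow> HH" where
  "lact a T = (\<Sum>k\<in>Poly_Mapping.keys T. \<Sum>u\<in>Poly_Mapping.keys a.
      Poly_Mapping.single (fst k, u @ snd k) (Poly_Mapping.lookup a u * Poly_Mapping.lookup T k))"

definition ract :: "HH \<Rightarrow> H \<Rightarrow> HH" where
  "ract T b = (\<Sum>k\<in>Poly_Mapping.keys T. \<Sum>u\<in>Poly_Mapping.keys b.
      Poly_Mapping.single (fst k @ u, snd k) (Poly_Mapping.lookup T k * Poly_Mapping.lookup b u))"

definition M1 :: "HH \<Rightarrow> H" where
  "M1 T = (\<Sum>k\<in>Poly_Mapping.keys T. Poly_Mapping.single (fst k @ snd k) (Poly_Mapping.lookup T k))"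

fun gamma_inv_letter :: "letter \<Rightarrow> H" where
  "gamma_inv_letter X = word [X]"
| "gamma_inv_letter Y = word [Y] - Poly_Mapping.single [X] tv - Poly_Mapping.single [] (hbar * tv)"

definition gamma_inv_word :: "letter list \<Rightarrow> H" where
  "gamma_inv_word w = foldr (\<lambda>a r. hmul (gamma_inv_letter a) r) w hone"

fun C_letter :: "letter \<Rightarrow> HH" where
  "C_letter X = Poly_Mapping.single ([X], [Y]) 1"
| "C_letter Y = - Poly_Mapping.single ([X], [Y]) 1"

text \<open>C on words, via the twisted Leibniz rule C(a w) = C(a) <> gamma^-1(w) + gamma^-1(a) <> C(w).\<close>
fun C_word :: "letter list \<Rightarrow> HH" where
  "C_word [] = 0"
| "C_word (a # w) = ract (C_letter a) (gamma_inv_word w) + lact (gamma_inv_letter a) (C_word w)"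

definition C1t :: "H \<Rightarrow> HH" where
  "C1t p = (\<Sum>u\<in>Poly_Mapping.keys p. Poly_Mapping.map (\<lambda>c. Poly_Mapping.lookup p u * c) (C_word u))"

definition rho1t :: "H \<Rightarrow> H" where
  "rho1t p = M1 (C1t p)"

definition cyclically_equivalent :: "letter list \<Rightarrow> letter list \<Rightarrow> bool" where
  "cyclically_equivalent v w \<longleftrightarrow> (\<exists>k. w = rotate k v)"

end

theory Submission
  imports Defs
begin

definition cm :: "coef \<Rightarrow> ('a \<Rightarrow>\<^sub>0 coef) \<Rightarrow> ('a \<Rightarrow>\<^sub>0 coef)" where
  "cm c p = Poly_Mapping.map ((*) c) p"

lemma lookup_map0: "Poly_Mapping.lookup (Poly_Mapping.map f p) k = (f (Poly_Mapping.lookup p k) when Poly_Mapping.lookup p k \<noteq> 0)"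
  by transfer simp

lemma lookup_cm[simp]: "Poly_Mapping.lookup (cm c p) k = c * Poly_Mapping.lookup p k"
  by (simp add: cm_def lookup_map0 when_def)

lemma cm_add: "cm c (p + q) = cm c p + cm c q"
  by (rule poly_mapping_eqI) (simp add: lookup_add algebra_simps)
lemma cm_zero[simp]: "cm c 0 = 0"
  by (rule poly_mapping_eqI) simp
lemma cm_single[simp]: "cm c (Poly_Mapping.single k d) = Poly_Mapping.single k (c * d)"
  by (rule poly_mapping_eqI) (simp add: lookup_single when_def)
lemma cm_one[simp]: "cm 1 p = p"
  by (rule poly_mapping_eqI) simp
lemma cm_cm[simp]: "cm c (cm d p) = cm (c*d) p"
  by (rule poly_mapping_eqI) (simp add: algebra_simps)
lemma cm_sum: "cm c (sum f A) = (\<Sum>i\<in>A. cm c (f i))"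
  by (induction A rule: infinite_finite_induct) (auto simp: cm_add)
lemma cm_minus: "cm c (- p) = - cm c p"
  by (rule poly_mapping_eqI) simp
lemma cm_neg: "cm (- c) p = - cm c p"
  by (rule poly_mapping_eqI) simp
lemma cm_distl: "cm (c + d) p = cm c p + cm d p"
  by (rule poly_mapping_eqI) (simp add: lookup_add algebra_simps)
lemma cm_0[simp]: "cm 0 p = 0"
  by (rule poly_mapping_eqI) simp

definition ext :: "('a \<Rightarrow> ('b \<Rightarrow>\<^sub>0 coef)) \<Rightarrow> ('a \<Rightarrow>\<^sub>0 coef) \<Rightarrow> ('b \<Rightarrow>\<^sub>0 coef)" where
  "ext f p = (\<Sum>i\<in>Poly_Mapping.keys p. cm (Poly_Mapping.lookup p i) (f i))"

lemma ext_superset: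
  assumes "finite S" "Poly_Mapping.keys p \<subseteq> S"
  shows "ext f p = (\<Sum>i\<in>S. cm (Poly_Mapping.lookup p i) (f i))"
  unfolding ext_def using assms
  by (intro sum.mono_neutral_left) (auto simp: in_keys_iff)

lemma ext_0[simp]: "ext f 0 = 0" by (simp add: ext_def)

lemma ext_add: "ext f (p + q) = ext f p + ext f q"
proof -
  let ?S = "Poly_Mapping.keys p \<union> Poly_Mapping.keys q"
  have "ext f (p+q) = (\<Sum>i\<in>?S. cm (Poly_Mapping.lookup (p+q) i) (f i))"
    by (rule ext_superset) (auto simp: keys_add)
  also have "\<dots> = (\<Sum>i\<in>?S. cm (Poly_Mapping.lookup p i) (f i)) + (\<Sum>i\<in>?S. cm (Poly_Mapping.lookup q i) (f i))"
    by (simp add: lookup_add cm_distl sum.distrib)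
  also have "\<dots> = ext f p + ext f q"
    using ext_superset[of ?S p f] ext_superset[of ?S q f] by simp
  finally show ?thesis .
qed

lemma ext_single[simp]: "ext f (Poly_Mapping.single a c) = cm c (f a)"
  by (cases "c = 0") (simp_all add: ext_def)

lemma keys_cm: "Poly_Mapping.keys (cm c p) \<subseteq> Poly_Mapping.keys p"
  by (auto simp: in_keys_iff)

lemma ext_cm: "ext f (cm c p) = cm c (ext f p)"
proof -
  have "ext f (cm c p) = (\<Sum>i\<in>Poly_Mapping.keys p. cm (Poly_Mapping.lookup (cm c p) i) (f i))"
    by (rule ext_superset) (auto simp: keys_cm)
  then show ?thesis by (simp add: ext_def cm_sum)
qed

lemma ext_sum: "ext f (sum g A) = (\<Sum>i\<in>A. ext f (g i))"
  by (induction A rule: infinite_finite_induct) (auto simp: ext_add)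

lemma ext_minus: "ext f (- p) = - ext f p"
proof -
  have "ext f (-p) + ext f p = 0" using ext_add[of f "-p" p] by simp
  then show ?thesis by (simp add: eq_neg_iff_add_eq_0)
qed

lemma pm_expand: "(p :: 'a \<Rightarrow>\<^sub>0 coef) = (\<Sum>i\<in>Poly_Mapping.keys p. Poly_Mapping.single i (Poly_Mapping.lookup p i))"
proof (rule poly_mapping_eqI)
  fix k
  have "finite (Poly_Mapping.keys p)" by simp
  show "Poly_Mapping.lookup p k = Poly_Mapping.lookup (\<Sum>i\<in>Poly_Mapping.keys p. Poly_Mapping.single i (Poly_Mapping.lookup p i)) k"
    by (simp add: lookup_sum lookup_single when_def in_keys_iff)
qed

lemma pm_induct[case_names zero single add]:
  assumes "P 0" "\<And>x c. P (Poly_Mapping.single x c)" "\<And>a b. P a \<Longrightarrow> P b \<Longrightarrow> P (a + b)"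
  shows "P (p :: 'a \<Rightarrow>\<^sub>0 coef)"
proof -
  have "P (\<Sum>i\<in>A. Poly_Mapping.single i (Poly_Mapping.lookup p i))" if "finite A" for A
    using that by (induction A rule: finite_induct) (auto simp: assms)
  then show ?thesis by (subst pm_expand) simp
qed

lemma ext_id: "ext (\<lambda>i. Poly_Mapping.single i 1) p = p"
  by (induction p rule: pm_induct) (auto simp: ext_add)

lemma ext_comp: "ext g (ext f p) = ext (\<lambda>i. ext g (f i)) p"
  by (induction p rule: pm_induct) (auto simp: ext_add ext_cm)

lemma ext_fadd: "ext (\<lambda>i. f i + g i) p = ext f p + ext g p"
  by (simp add: ext_def cm_add sum.distrib)
lemma ext_fzero[simp]: "ext (\<lambda>i. 0) p = 0"
  by (simp add: ext_def)
lemma ext_fcm: "ext (\<lambda>i. cm c (f i)) p = cm c (ext f p)"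
  by (simp add: ext_def cm_sum mult.commute)

definition bl :: "('a \<Rightarrow> 'b \<Rightarrow> 'c) \<Rightarrow> ('a \<Rightarrow>\<^sub>0 coef) \<Rightarrow> ('b \<Rightarrow>\<^sub>0 coef) \<Rightarrow> ('c \<Rightarrow>\<^sub>0 coef)" where
  "bl f p q = ext (\<lambda>u. ext (\<lambda>v. Poly_Mapping.single (f u v) 1) q) p"

lemma bl_eq: "bl f p q = (\<Sum>u\<in>Poly_Mapping.keys p. \<Sum>v\<in>Poly_Mapping.keys q.
   Poly_Mapping.single (f u v) (Poly_Mapping.lookup p u * Poly_Mapping.lookup q v))"
  by (simp add: bl_def ext_def cm_sum)

lemma bl_single[simp]: "bl f (Poly_Mapping.single u a) (Poly_Mapping.single v b) = Poly_Mapping.single (f u v) (a * b)"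
  by (simp add: bl_def)
lemma bl_0l[simp]: "bl f 0 q = 0" by (simp add: bl_def)
lemma bl_0r[simp]: "bl f p 0 = 0" by (simp add: bl_def)
lemma bl_addl: "bl f (p + p') q = bl f p q + bl f p' q" by (simp add: bl_def ext_add)
lemma bl_addr: "bl f p (q + q') = bl f p q + bl f p q'" by (simp add: bl_def ext_add ext_fadd)
lemma bl_cml: "bl f (cm c p) q = cm c (bl f p q)" by (simp add: bl_def ext_cm)
lemma bl_cmr: "bl f p (cm c q) = cm c (bl f p q)" by (simp add: bl_def ext_cm ext_fcm)
lemma bl_suml: "bl f (sum g A) q = (\<Sum>i\<in>A. bl f (g i) q)"
  by (induction A rule: infinite_finite_induct) (auto simp: bl_addl)
lemma bl_sumr: "bl f p (sum g A) = (\<Sum>i\<in>A. bl f p (g i))"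
  by (induction A rule: infinite_finite_induct) (auto simp: bl_addr)
lemma bl_minusl: "bl f (- p) q = - bl f p q"
proof -
  have "bl f (-p) q + bl f p q = 0" using bl_addl[of f "-p" p q] by simp
  then show ?thesis by (simp add: eq_neg_iff_add_eq_0)
qed
lemma bl_minusr: "bl f p (- q) = - bl f p q"
proof -
  have "bl f p (-q) + bl f p q = 0" using bl_addr[of f p "-q" q] by simp
  then show ?thesis by (simp add: eq_neg_iff_add_eq_0)
qed
lemma bl_diffl: "bl f (p - p') q = bl f p q - bl f p' q"
  using bl_addl[of f p "-p'" q] by (simp add: bl_minusl)
lemma bl_diffr: "bl f p (q - q') = bl f p q - bl f p q'"
  using bl_addr[of f p q "-q'"] by (simp add: bl_minusr)

lemmas bl_lin = bl_addl bl_addr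

lemma hmul_bl: "hmul p q = bl (@) p q"
  by (simp add: hmul_def bl_eq)

definition Lf :: "letter list \<Rightarrow> letter list \<times> letter list \<Rightarrow> letter list \<times> letter list" where
  "Lf u k = (fst k, u @ snd k)"
definition Rf :: "letter list \<times> letter list \<Rightarrow> letter list \<Rightarrow> letter list \<times> letter list" where
  "Rf k u = (fst k @ u, snd k)"

lemma lact_bl: "lact a T = bl Lf a T"
  unfolding lact_def bl_eq Lf_def
  by (subst sum.swap) (simp add: mult.commute)

lemma ract_bl: "ract T b = bl Rf T b"
  unfolding ract_def bl_eq Rf_def by simp

lemma M1_ext: "M1 T = ext (\<lambda>k. Poly_Mapping.single (fst k @ snd k) 1) T"
  by (simp add: M1_def ext_def)

lemma C1t_ext: "C1t p = ext C_word p"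
  by (simp add: C1t_def ext_def cm_def)

lemma assoc: "bl (@) (bl (@) p q) r = bl (@) p (bl (@) q r)"
proof (induction p rule: pm_induct)
  case (single u a)
  show ?case
  proof (induction q rule: pm_induct)
    case (single v b)
    show ?case by (induction r rule: pm_induct) (simp_all add: bl_lin mult.assoc)
  qed (simp_all add: bl_lin)
qed (simp_all add: bl_lin)

lemma hone_left: "bl (@) hone q = q"
  by (induction q rule: pm_induct) (simp_all add: hone_def bl_lin)

lemma G_append: "gamma_inv_word (u @ v) = hmul (gamma_inv_word u) (gamma_inv_word v)"
  by (induction u) (simp_all add: gamma_inv_word_def hmul_bl hone_left assoc)

lemma lact_lact: "bl Lf a (bl Lf b T) = bl Lf (bl (@) a b) T"
proof (induction a rule: pm_induct)
  case (single u c)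
  show ?case
  proof (induction b rule: pm_induct)
    case (single v d)
    show ?case by (induction T rule: pm_induct) (simp_all add: bl_lin Lf_def mult.assoc)
  qed (simp_all add: bl_lin)
qed (simp_all add: bl_lin)

lemma lact_hone: "bl Lf hone T = T"
  by (induction T rule: pm_induct) (simp_all add: hone_def bl_lin Lf_def)

lemma claimB: "ext (\<lambda>k. Poly_Mapping.single (fst k @ snd k) 1) (bl Lf a (bl Rf (Poly_Mapping.single ([X],[Y]) e) b))
  = cm e (bl (@) (Poly_Mapping.single [X] 1) (bl (@) (bl (@) b a) (Poly_Mapping.single [Y] 1)))"
proof (induction a rule: pm_induct)
  case (single u c)
  show ?case
    by (induction b rule: pm_induct) (simp_all add: bl_lin Lf_def Rf_def ext_add cm_add mult.commute mult.left_commute)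
qed (simp_all add: bl_lin ext_add cm_add)

fun eps :: "letter \<Rightarrow> coef" where
  "eps X = 1" | "eps Y = -1"

lemma C_letter_eps: "C_letter a = Poly_Mapping.single ([X],[Y]) (eps a)"
  by (cases a) (simp_all add: single_uminus)

lemma G_Cons: "gamma_inv_word (a # u) = bl (@) (gamma_inv_letter a) (gamma_inv_word u)"
  by (simp add: gamma_inv_word_def hmul_bl)

lemma G_Nil: "gamma_inv_word [] = hone"
  by (simp add: gamma_inv_word_def)

lemma claimA: "C_word w = (\<Sum>i<length w. bl Lf (gamma_inv_word (take i w))
    (bl Rf (Poly_Mapping.single ([X],[Y]) (eps (w!i))) (gamma_inv_word (drop (Suc i) w))))"
proof (induction w)
  case Nil
  then show ?case by simp
next
  case (Cons a w)
  have "C_word (a # w) = bl Rf (Poly_Mapping.single ([X],[Y]) (eps a)) (gamma_inv_word w)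
     + bl Lf (gamma_inv_letter a) (C_word w)"
    by (simp add: C_letter_eps ract_bl lact_bl)
  also have "\<dots> = bl Rf (Poly_Mapping.single ([X],[Y]) (eps a)) (gamma_inv_word w)
     + (\<Sum>i<length w. bl Lf (gamma_inv_word (take (Suc i) (a#w)))
    (bl Rf (Poly_Mapping.single ([X],[Y]) (eps ((a#w)!(Suc i)))) (gamma_inv_word (drop (Suc (Suc i)) (a#w)))))"
    by (simp add: Cons.IH bl_sumr lact_lact G_Cons)
  also have "\<dots> = (\<Sum>i<length (a#w). bl Lf (gamma_inv_word (take i (a#w)))
    (bl Rf (Poly_Mapping.single ([X],[Y]) (eps ((a#w)!i))) (gamma_inv_word (drop (Suc i) (a#w)))))"
    by (simp only: length_Cons sum.lessThan_Suc_shift) (simp add: G_Nil lact_hone)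
  finally show ?case .
qed

definition Phi :: "(letter \<Rightarrow> letter list \<Rightarrow> H) \<Rightarrow> letter list \<Rightarrow> H" where
  "Phi h w = (\<Sum>i<length w. h (w!i) (drop (Suc i) w @ take i w))"

lemma rho_formula: "rho1t (word w) = Phi (\<lambda>c u. cm (eps c) (bl (@) (Poly_Mapping.single [X] 1)
    (bl (@) (gamma_inv_word u) (Poly_Mapping.single [Y] 1)))) w"
proof -
  have "rho1t (word w) = ext (\<lambda>k. Poly_Mapping.single (fst k @ snd k) 1) (C_word w)"
    by (simp add: rho1t_def M1_ext C1t_ext word_def)
  also have "\<dots> = Phi (\<lambda>c u. cm (eps c) (bl (@) (Poly_Mapping.single [X] 1)
    (bl (@) (gamma_inv_word u) (Poly_Mapping.single [Y] 1)))) w"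
    unfolding Phi_def claimA ext_sum claimB
    by (simp add: G_append hmul_bl)
  finally show ?thesis .
qed

lemma Phi_rotate1: "Phi h (rotate1 w) = Phi h w"
proof (cases w)
  case Nil
  then show ?thesis by simp
next
  case (Cons a v)
  have "Phi h (rotate1 w) = (\<Sum>i<Suc (length v). h ((v@[a])!i) (drop (Suc i) (v@[a]) @ take i (v@[a])))"
    by (simp add: Phi_def Cons)
  also have "\<dots> = (\<Sum>i<length v. h (v!i) (drop (Suc i) v @ a # take i v)) + h a v"
    by (simp add: sum.lessThan_Suc nth_append)
  also have "\<dots> = Phi h w"
    by (simp only: Phi_def Cons length_Cons sum.lessThan_Suc_shift) (simp add: add.commute)
  finally show ?thesis .
qed

lemma Phi_rotate: "Phi h (rotate k w) = Phi h w"
  by (induction k) (simp_all add: Phi_rotate1)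

theorem proposition3p3:
  fixes v w :: "letter list"
  assumes "cyclically_equivalent v w"
  shows "rho1t (word v) = rho1t (word w)"
proof -
  obtain k where "w = rotate k v" using assms by (auto simp: cyclically_equivalent_def)
  then show ?thesis by (simp add: rho_formula Phi_rotate)
qed

end
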